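(* Let $(T,d)$ be a real tree. Then: (1) $\mathcal S\subset\mathcal B_0\subset\mathcal G$ and $\overline{\mathcal S}\subset\mathcal G$; (2) if $T$ is separable, then $\mathcal B_0=\mathcal B$ and $\overline{\mathcal S}=\mathcal G$.
   Context: A real tree is a geodesic $0$-hyperbolic (in the sense of Gromov) metric space; $[x,y]$ denotes the unique arc (segment) joining $x$ and $y$. $\mathcal G$ is the $\sigma$-algebra of subsets $S\subset T$ such that $S\cap[x,y]$ is Lebesgue-measurable in $[x,y]$ (identified isometrically with a real interval) for all $x,y\in T$; on it, the length measure is $\lambda(S)=\sup_R\sum_{i=1}^k\mathrm{Leb}_{S_i}(S_i\cap S)$, the supremum over finite disjoint unions $R=\bigcup_{i=1}^kS_i$ of segments. $\mathcal S$ is the $\sigma$-algebra generated by segments; $\overline{\mathcal S}$ is its completion with respect to $\lambda$-negligible sets (i.e. by adding subsets of sets in $\mathcal S$ of $\lambda$-measure zero); $\mathcal B$ is the Borel $\sigma$-algebra (generated by open sets); $\mathcal B_0$ is the $\sigma$-algebra generated by open balls. *)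

theory Defs
  imports "HOL-Analysis.Analysis"
begin

definition geodesic_path :: "(real \<Rightarrow> 'a::metric_space) \<Rightarrow> 'a \<Rightarrow> 'a \<Rightarrow> bool" where
  "geodesic_path \<gamma> x y \<longleftrightarrow> \<gamma> 0 = x \<and> \<gamma> (dist x y) = y \<and>
     (\<forall>s\<in>{0..dist x y}. \<forall>t\<in>{0..dist x y}. dist (\<gamma> s) (\<gamma> t) = \<bar>s - t\<bar>)"

definition geodesic_space :: "'a::metric_space set \<Rightarrow> bool" where
  "geodesic_space T \<longleftrightarrow> (\<forall>x\<in>T. \<forall>y\<in>T. \<exists>\<gamma>. geodesic_path \<gamma> x y \<and> \<gamma> ` {0..dist x y} \<subseteq> T)"

definition gromov_product :: "'a::metric_space \<Rightarrow> 'a \<Rightarrow> 'a \<Rightarrow> real" where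
  "gromov_product w x y = (dist x w + dist y w - dist x y) / 2"

definition gromov_hyperbolic :: "real \<Rightarrow> 'a::metric_space set \<Rightarrow> bool" where
  "gromov_hyperbolic \<delta> T \<longleftrightarrow> (\<forall>x\<in>T. \<forall>y\<in>T. \<forall>z\<in>T. \<forall>w\<in>T.
     gromov_product w x y \<ge> min (gromov_product w x z) (gromov_product w y z) - \<delta>)"

definition real_tree :: "'a::metric_space set \<Rightarrow> bool" where
  "real_tree T \<longleftrightarrow> geodesic_space T \<and> gromov_hyperbolic 0 T"

text \<open>The (in a real tree unique) geodesic parametrisation of the segment [x,y], and the segment.\<close>
definition seg_param :: "'a::metric_space \<Rightarrow> 'a \<Rightarrow> real \<Rightarrow> 'a" where
  "seg_param x y = (SOME \<gamma>. geodesic_path \<gamma> x y)"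

definition segment_rt :: "'a::metric_space \<Rightarrow> 'a \<Rightarrow> 'a set" where
  "segment_rt x y = seg_param x y ` {0..dist x y}"

text \<open>S \<inter> [x,y], transported to the real interval [0, d(x,y)] via the isometric identification.\<close>
definition seg_trace :: "'a::metric_space \<Rightarrow> 'a \<Rightarrow> 'a set \<Rightarrow> real set" where
  "seg_trace x y S = {t \<in> {0..dist x y}. seg_param x y t \<in> S}"

definition G_sets :: "'a::metric_space set set" where
  "G_sets = {S. \<forall>x y. seg_trace x y S \<in> sets lebesgue}"

definition length_measure :: "'a::metric_space set \<Rightarrow> ennreal" where
  "length_measure S = (SUP p \<in> {(n, f :: nat \<Rightarrow> 'a \<times> 'a). \<forall>i<n. \<forall>j<n. i \<noteq> j \<longrightarrow>
          segment_rt (fst (f i)) (snd (f i)) \<inter> segment_rt (fst (f j)) (snd (f j)) = {}}.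
     (\<Sum>i<fst p. emeasure lebesgue (seg_trace (fst (snd p i)) (snd (snd p i)) S)))"

definition S_sets :: "'a::metric_space set set" where
  "S_sets = sigma_sets UNIV {segment_rt x y | x y. True}"

definition S_completion :: "'a::metric_space set set" where
  "S_completion = {A \<union> N | A N. A \<in> S_sets \<and> (\<exists>M \<in> S_sets. N \<subseteq> M \<and> length_measure M = 0)}"

definition B0_sets :: "'a::metric_space set set" where
  "B0_sets = sigma_sets UNIV {ball x r | x r. True}"

definition separable_metric :: "'a::metric_space set \<Rightarrow> bool" where
  "separable_metric T \<longleftrightarrow> (\<exists>D\<subseteq>T. countable D \<and> T \<subseteq> closure D)"

end

theory Submission
  imports Defs
begin

lemma gp_nonneg: "gromov_product w x y \<ge> 0"
  unfolding gromov_product_def using dist_triangle3[of x y w] by (simp add: dist_commute)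

lemma gp_zero:
  fixes w x y :: "'a::metric_space"
  assumes "gromov_product w x y \<le> 0"
  shows "dist x w + dist w y = dist x y"
proof -
  have "dist x y \<le> dist x w + dist w y" by (rule dist_triangle)
  moreover have "dist y w = dist w y" by (rule dist_commute)
  moreover have "dist x w + dist y w - dist x y \<le> 0" using assms unfolding gromov_product_def by simp
  ultimately show ?thesis by linarith
qed

lemma rt_geo:
  assumes R: "real_tree (UNIV :: 'a::metric_space set)"
  shows "geodesic_path (seg_param x y) x (y::'a)"
proof -
  from R have "\<exists>\<gamma>. geodesic_path \<gamma> x y" unfolding real_tree_def geodesic_space_def by blast
  then show ?thesis unfolding seg_param_def by (rule someI_ex)
qed

lemma rt_iso:
  fixes x y :: "'a::metric_space"
  assumes R: "real_tree (UNIV :: 'a::metric_space set)"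
    and "s \<in> {0..dist x y}" "t \<in> {0..dist x y}"
  shows "dist (seg_param x y s) (seg_param x y t) = \<bar>s - t\<bar>"
  using rt_geo[OF R, of x y] assms unfolding geodesic_path_def by blast

lemma rt_ends:
  assumes R: "real_tree (UNIV :: 'a::metric_space set)"
  shows "seg_param x y 0 = x" "seg_param x y (dist x y) = (y::'a)"
  using rt_geo[OF R, of x y] unfolding geodesic_path_def by auto

lemma rt_dists:
  fixes x y :: "'a::metric_space"
  assumes R: "real_tree (UNIV :: 'a::metric_space set)"
    and t: "t \<in> {0..dist x y}"
  shows "dist x (seg_param x y t) = t" "dist (seg_param x y t) y = dist x y - t"
proof -
  have "dist (seg_param x y 0) (seg_param x y t) = \<bar>0 - t\<bar>" by (rule rt_iso[OF R]) (use t in auto)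
  then show "dist x (seg_param x y t) = t" using t rt_ends[OF R] by simp
  have "dist (seg_param x y t) (seg_param x y (dist x y)) = \<bar>t - dist x y\<bar>" by (rule rt_iso[OF R]) (use t in auto)
  then show "dist (seg_param x y t) y = dist x y - t" using t rt_ends[OF R] by simp
qed

lemma rt_hyp:
  fixes w x y z :: "'a::metric_space"
  assumes R: "real_tree (UNIV :: 'a::metric_space set)"
  shows "gromov_product w x y \<ge> min (gromov_product w x z) (gromov_product w y z)"
  using R unfolding real_tree_def gromov_hyperbolic_def by auto

lemma rt_uniq:
  fixes x y z :: "'a::metric_space"
  assumes R: "real_tree (UNIV :: 'a::metric_space set)"
    and t: "t \<in> {0..dist x y}" and z1: "dist x z = t" and z2: "dist z y = dist x y - t"
  shows "z = seg_param x y t"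
proof -
  let ?p = "seg_param x y t"
  have p1: "dist x ?p = t" and p2: "dist ?p y = dist x y - t" using rt_dists[OF R t] by auto
  have h: "gromov_product x z ?p \<ge> min (gromov_product x z y) (gromov_product x ?p y)"
    by (rule rt_hyp[OF R])
  have "gromov_product x z y = t" using z1 z2 unfolding gromov_product_def by (simp add: dist_commute)
  moreover have "gromov_product x ?p y = t" using p1 p2 unfolding gromov_product_def by (simp add: dist_commute)
  ultimately have "gromov_product x z ?p \<ge> t" using h by simp
  then have "dist z ?p \<le> 0" using z1 p1 unfolding gromov_product_def by (simp add: dist_commute)
  then show ?thesis by simp
qed

lemma rt_seg_char:
  fixes x y :: "'a::metric_space"
  assumes R: "real_tree (UNIV :: 'a::metric_space set)"
  shows "segment_rt x y = {z. dist x z + dist z y = dist x y}"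
proof (intro set_eqI iffI)
  fix z assume "z \<in> segment_rt x y"
  then obtain t where t: "t \<in> {0..dist x y}" "z = seg_param x y t" unfolding segment_rt_def by auto
  then show "z \<in> {z. dist x z + dist z y = dist x y}" using rt_dists[OF R t(1)] by simp
next
  fix z assume "z \<in> {z. dist x z + dist z y = dist x y}"
  then have e: "dist x z + dist z y = dist x y" by simp
  have nn: "0 \<le> dist z y" "0 \<le> dist x z" by simp_all
  have t: "dist x z \<in> {0..dist x y}" unfolding atLeastAtMost_iff using e nn by linarith
  have "z = seg_param x y (dist x z)" by (rule rt_uniq[OF R t]) (use e in auto)
  then show "z \<in> segment_rt x y" unfolding segment_rt_def using t by blast
qed

lemma rt_subseg:
  fixes x y :: "'a::metric_space"
  assumes R: "real_tree (UNIV :: 'a::metric_space set)"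
    and ab: "0 \<le> a" "a \<le> b" "b \<le> dist x y"
  shows "seg_param x y ` {a..b} = segment_rt (seg_param x y a) (seg_param x y b)"
proof -
  let ?g = "seg_param x y" and ?d = "dist x y"
  have duv: "dist (?g a) (?g b) = b - a" using rt_iso[OF R, of a x y b] ab by auto
  show ?thesis unfolding rt_seg_char[OF R] duv
  proof (intro set_eqI iffI)
    fix z assume "z \<in> ?g ` {a..b}"
    then obtain s where s: "s \<in> {a..b}" "z = ?g s" by auto
    have "dist (?g a) (?g s) = s - a" using rt_iso[OF R, of a x y s] ab s by auto
    moreover have "dist (?g s) (?g b) = b - s" using rt_iso[OF R, of s x y b] ab s by auto
    ultimately show "z \<in> {z. dist (?g a) z + dist z (?g b) = b - a}" using s by simp
  next
    fix z assume "z \<in> {z. dist (?g a) z + dist z (?g b) = b - a}"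
    then have e: "dist (?g a) z + dist z (?g b) = b - a" by simp
    have xa: "dist x (?g a) = a" "dist (?g b) y = ?d - b" using rt_dists[OF R, of a x y] rt_dists[OF R, of b x y] ab by auto
    have t1: "dist x z \<le> dist x (?g a) + dist (?g a) z" by (rule dist_triangle)
    have t2: "dist z y \<le> dist z (?g b) + dist (?g b) y" by (rule dist_triangle)
    have t3: "dist x y \<le> dist x z + dist z y" by (rule dist_triangle)
    have ex: "dist x z = a + dist (?g a) z" using t1 t2 t3 xa e by linarith
    have ez: "dist z y = ?d - dist x z" using t1 t2 t3 xa e by linarith
    have t: "dist x z \<in> {0..?d}" using ex ez ab zero_le_dist[of z y] by auto
    have "z = ?g (dist x z)" by (rule rt_uniq[OF R t]) (use ez in auto)
    moreover have "dist x z \<in> {a..b}" unfolding atLeastAtMost_iff using ex e zero_le_dist[of z "?g b"] zero_le_dist[of "?g a" z] by linarith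
    ultimately show "z \<in> ?g ` {a..b}" by blast
  qed
qed


lemma borel_leb: "(A::real set) \<in> sets borel \<Longrightarrow> A \<in> sets lebesgue"
  by (metis sets_completionI_sets sets_lborel)

lemma B0_sa: "sigma_algebra UNIV (B0_sets :: 'a::metric_space set set)"
  unfolding B0_sets_def by (rule sigma_algebra_sigma_sets) auto

lemma S_sa: "sigma_algebra UNIV (S_sets :: 'a::metric_space set set)"
  unfolding S_sets_def by (rule sigma_algebra_sigma_sets) auto

lemma S_Diff: "A \<in> S_sets \<Longrightarrow> B \<in> S_sets \<Longrightarrow> A - B \<in> S_sets"
proof -
  assume "A \<in> S_sets" "B \<in> S_sets"
  interpret sigma_algebra UNIV S_sets by (rule S_sa)
  show ?thesis using \<open>A \<in> S_sets\<close> \<open>B \<in> S_sets\<close> by (rule Diff)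
qed

lemma S_Un: "A \<in> S_sets \<Longrightarrow> B \<in> S_sets \<Longrightarrow> A \<union> B \<in> S_sets"
proof -
  assume "A \<in> S_sets" "B \<in> S_sets"
  interpret sigma_algebra UNIV S_sets by (rule S_sa)
  show ?thesis using \<open>A \<in> S_sets\<close> \<open>B \<in> S_sets\<close> by (rule Un)
qed

lemma S_UNIV: "UNIV \<in> S_sets"
proof -
  interpret sigma_algebra UNIV S_sets by (rule S_sa)
  show ?thesis by (rule top)
qed

lemma G_sa: "sigma_algebra UNIV (G_sets :: 'a::metric_space set set)"
  unfolding sigma_algebra_iff2
proof (intro conjI allI ballI impI)
  show "G_sets \<subseteq> Pow UNIV" by simp
  show "{} \<in> (G_sets :: 'a set set)" unfolding G_sets_def seg_trace_def by simp
next
  fix S :: "'a set" assume S: "S \<in> G_sets"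
  show "UNIV - S \<in> G_sets" unfolding G_sets_def
  proof (intro CollectI allI)
    fix x y :: 'a
    have "seg_trace x y (UNIV - S) = {0..dist x y} - seg_trace x y S"
      unfolding seg_trace_def by auto
    moreover have "{0..dist x y} \<in> sets lebesgue" by (rule borel_leb) simp
    ultimately show "seg_trace x y (UNIV - S) \<in> sets lebesgue"
      using S unfolding G_sets_def by auto
  qed
next
  fix A :: "nat \<Rightarrow> 'a set" assume A: "range A \<subseteq> G_sets"
  show "(\<Union>i. A i) \<in> G_sets" unfolding G_sets_def
  proof (intro CollectI allI)
    fix x y :: 'a
    have "seg_trace x y (\<Union>i. A i) = (\<Union>i. seg_trace x y (A i))"
      unfolding seg_trace_def by auto
    moreover have "seg_trace x y (A i) \<in> sets lebesgue" for i using A unfolding G_sets_def by auto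
    ultimately show "seg_trace x y (\<Union>i. A i) \<in> sets lebesgue" by auto
  qed
qed

lemma rt_cont:
  fixes x y :: "'a::metric_space"
  assumes R: "real_tree (UNIV :: 'a::metric_space set)"
  shows "continuous_on UNIV (\<lambda>t. seg_param x y (max 0 (min (dist x y) t)))"
proof -
  have c1: "continuous_on {0..dist x y} (seg_param x y)"
    unfolding continuous_on_iff
  proof (intro ballI allI impI)
    fix t e assume t: "t \<in> {0..dist x y}" and e: "(0::real) < e"
    show "\<exists>d>0. \<forall>x'\<in>{0..dist x y}. dist x' t < d \<longrightarrow> dist (seg_param x y x') (seg_param x y t) < e"
      using e t rt_iso[OF R, of _ x y t] by (intro exI[of _ e]) (auto simp: dist_real_def)
  qed
  have c2: "continuous_on UNIV (\<lambda>t::real. max 0 (min (dist x y) t))"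
    by (intro continuous_intros)
  show ?thesis
    by (rule continuous_on_compose2[OF c1 c2]) auto
qed

lemma ball_G:
  fixes c :: "'a::metric_space"
  assumes R: "real_tree (UNIV :: 'a::metric_space set)"
  shows "ball c r \<in> G_sets"
  unfolding G_sets_def
proof (intro CollectI allI)
  fix x y :: 'a
  let ?h = "\<lambda>t. dist (seg_param x y (max 0 (min (dist x y) t))) c"
  have "continuous_on UNIV ?h"
    by (intro continuous_on_dist rt_cont[OF R] continuous_on_const)
  then have "open {t. ?h t < r}" by (intro open_Collect_less continuous_on_const)
  then have "{0..dist x y} \<inter> {t. ?h t < r} \<in> sets lebesgue"
    by (intro borel_leb sets.Int borel_open borel_closed) auto
  moreover have "seg_trace x y (ball c r) = {0..dist x y} \<inter> {t. ?h t < r}"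
    unfolding seg_trace_def by (auto simp: dist_commute)
  ultimately show "seg_trace x y (ball c r) \<in> sets lebesgue" by simp
qed

lemma B0_G:
  assumes R: "real_tree (UNIV :: 'a::metric_space set)"
  shows "(B0_sets :: 'a set set) \<subseteq> G_sets"
  unfolding B0_sets_def
  by (rule sigma_algebra.sigma_sets_subset[OF G_sa]) (auto intro: ball_G[OF R])

lemma seg_B0:
  fixes x y :: "'a::metric_space"
  assumes R: "real_tree (UNIV :: 'a::metric_space set)"
  shows "segment_rt x y \<in> B0_sets"
proof -
  let ?d = "dist x y"
  let ?c = "\<lambda>q::real. seg_param x y (max 0 (min ?d q))"
  have eq: "segment_rt x y = (\<Inter>n. \<Union>q\<in>\<rat>. ball (?c q) (1 / real (Suc n)))"
  proof (intro set_eqI iffI)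
    fix z assume "z \<in> segment_rt x y"
    then obtain t where t: "t \<in> {0..?d}" "z = seg_param x y t" unfolding segment_rt_def by auto
    show "z \<in> (\<Inter>n. \<Union>q\<in>\<rat>. ball (?c q) (1 / real (Suc n)))"
    proof (rule INT_I)
      fix n :: nat
      obtain q where q: "q \<in> \<rat>" "t < q" "q < t + 1 / real (Suc n)"
        using Rats_dense_in_real[of t "t + 1 / real (Suc n)"] by auto
      have m: "max 0 (min ?d q) \<in> {0..?d}" using t by auto
      have "dist (?c q) z = \<bar>max 0 (min ?d q) - t\<bar>"
        using rt_iso[OF R m t(1)] t(2) by simp
      moreover have "t \<le> max 0 (min ?d q)" "max 0 (min ?d q) \<le> q" using t(1) q(2) by auto
      ultimately have "dist (?c q) z < 1 / real (Suc n)" using q(3) by simp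
      then have "z \<in> ball (?c q) (1 / real (Suc n))" by simp
      then show "z \<in> (\<Union>q\<in>\<rat>. ball (?c q) (1 / real (Suc n)))" using q(1) by blast
    qed
  next
    fix z assume z: "z \<in> (\<Inter>n. \<Union>q\<in>\<rat>. ball (?c q) (1 / real (Suc n)))"
    have le: "dist x z + dist z y \<le> ?d + 2 / real (Suc n)" for n
    proof -
      from z obtain q where q: "dist (?c q) z < 1 / real (Suc n)" by auto
      have m: "max 0 (min ?d q) \<in> {0..?d}" by auto
      have "dist x z \<le> dist x (?c q) + dist (?c q) z" by (rule dist_triangle)
      moreover have "dist z y \<le> dist z (?c q) + dist (?c q) y" by (rule dist_triangle)
      moreover have "dist x (?c q) = max 0 (min ?d q)" "dist (?c q) y = ?d - max 0 (min ?d q)"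
        using rt_dists[OF R m] by auto
      moreover have "dist z (?c q) < 1 / real (Suc n)" using q by (simp add: dist_commute)
      moreover have "dist (?c q) z = dist z (?c q)" by (rule dist_commute)
      moreover have "2 / real (Suc n) = 1 / real (Suc n) + 1 / real (Suc n)" by simp
      ultimately show ?thesis by linarith
    qed
    have "dist x z + dist z y \<le> ?d"
    proof (rule ccontr)
      assume "\<not> ?thesis"
      then have "0 < (dist x z + dist z y - ?d) / 2" by simp
      then obtain n where n: "1 / real (Suc n) < (dist x z + dist z y - ?d) / 2"
        by (rule nat_approx_posE)
      show False using le[of n] n by simp
    qed
    then have "dist x z + dist z y = ?d" using dist_triangle[of x y z] by simp
    then show "z \<in> segment_rt x y" unfolding rt_seg_char[OF R] by simp
  qed
  have U: "UNIV \<in> (B0_sets :: 'a set set)" by (rule algebra.top[OF sigma_algebra.axioms(1)[OF B0_sa]])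
  show ?thesis unfolding eq
  proof (rule sigma_algebra.countable_INT''[OF B0_sa U])
    show "countable (UNIV :: nat set)" by simp
    fix n :: nat
    show "(\<Union>q\<in>\<rat>. ball (?c q) (1 / real (Suc n))) \<in> B0_sets"
    proof (rule sigma_algebra.countable_UN''[OF B0_sa])
      show "countable (\<rat> :: real set)" by (rule countable_rat)
      fix q :: real
      show "ball (?c q) (1 / real (Suc n)) \<in> B0_sets"
        unfolding B0_sets_def by (rule sigma_sets.Basic) blast
    qed
  qed
qed

lemma S_B0:
  assumes R: "real_tree (UNIV :: 'a::metric_space set)"
  shows "(S_sets :: 'a set set) \<subseteq> B0_sets"
  unfolding S_sets_def
  by (rule sigma_algebra.sigma_sets_subset[OF B0_sa]) (auto intro: seg_B0[OF R])

lemma trace_le_length: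
  "emeasure lebesgue (seg_trace x y M) \<le> length_measure M"
  unfolding length_measure_def
  by (rule SUP_upper2[of "(1, \<lambda>_. (x,y))"]) auto

lemma Sc_G:
  assumes R: "real_tree (UNIV :: 'a::metric_space set)"
  shows "(S_completion :: 'a set set) \<subseteq> G_sets"
proof
  fix X :: "'a set" assume "X \<in> S_completion"
  then obtain A N M where X: "X = A \<union> N" and A: "A \<in> S_sets" and M: "M \<in> S_sets" "N \<subseteq> M"
    "length_measure M = 0"
    unfolding S_completion_def by auto
  have AG: "A \<in> G_sets" and MG: "M \<in> G_sets" using A M S_B0[OF R] B0_G[OF R] by auto
  show "X \<in> G_sets" unfolding G_sets_def
  proof (intro CollectI allI)
    fix x y :: 'a
    have Mt: "seg_trace x y M \<in> sets lebesgue" using MG unfolding G_sets_def by auto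
    have "emeasure lebesgue (seg_trace x y M) = 0"
      using trace_le_length[of x y M] M(3) by simp
    then have "seg_trace x y M \<in> null_sets lebesgue" using Mt by (simp add: null_sets_def)
    moreover have "seg_trace x y N \<subseteq> seg_trace x y M" using M(2) unfolding seg_trace_def by auto
    ultimately have "seg_trace x y N \<in> sets lebesgue"
      by (metis negligible_iff_null_sets negligible_subset null_setsD2)
    moreover have "seg_trace x y A \<in> sets lebesgue" using AG unfolding G_sets_def by auto
    moreover have "seg_trace x y X = seg_trace x y A \<union> seg_trace x y N" unfolding X seg_trace_def by auto
    ultimately show "seg_trace x y X \<in> sets lebesgue" by auto
  qed
qed


lemma open_B0:
  assumes D: "countable (D :: 'a::metric_space set)" and dense: "\<And>z e. 0 < e \<Longrightarrow> \<exists>a\<in>D. dist a z < e"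
    and U: "open (U :: 'a set)"
  shows "U \<in> B0_sets"
proof -
  let ?F = "(\<lambda>(d,q). ball d q) ` {p \<in> D \<times> \<rat>. ball (fst p) (snd p) \<subseteq> U}"
  have eq: "U = \<Union>?F"
  proof (intro set_eqI iffI)
    fix z assume z: "z \<in> U"
    then obtain e where e: "e > 0" "ball z e \<subseteq> U" using U open_contains_ball by blast
    obtain d where d: "d \<in> D" "dist d z < e / 4" using dense[of "e/4"] e by auto
    obtain q where q: "q \<in> \<rat>" "e / 4 < q" "q < e / 2" using Rats_dense_in_real[of "e/4" "e/2"] e by auto
    have "ball d q \<subseteq> ball z e"
    proof
      fix w assume "w \<in> ball d q"
      then have "dist d w < q" by simp
      moreover have "dist z w \<le> dist z d + dist d w" by (rule dist_triangle)
      moreover have "dist z d = dist d z" by (rule dist_commute)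
      ultimately show "w \<in> ball z e" using d q by simp
    qed
    then have "ball d q \<in> ?F" using d q e by force
    moreover have "z \<in> ball d q" using d q by (simp add: dist_commute)
    ultimately show "z \<in> \<Union>?F" by (rule UnionI)
  qed auto
  have "countable (D \<times> (\<rat>::real set))" using D countable_rat by (rule countable_SIGMA)
  then have cDQ: "countable (D \<times> (\<rat>::real set))" .
  have sub: "{p \<in> D \<times> \<rat>. ball (fst p) (snd p) \<subseteq> U} \<subseteq> D \<times> \<rat>" by blast
  have cF: "countable ?F" by (rule countable_image[OF countable_subset[OF sub cDQ]])
  have FB: "?F \<subseteq> B0_sets"
  proof
    fix X assume "X \<in> ?F"
    then obtain d q where "X = ball d q" by auto
    then show "X \<in> B0_sets" unfolding B0_sets_def by (intro sigma_sets.Basic) blast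
  qed
  have "\<Union>?F \<in> B0_sets" by (rule sigma_algebra.countable_Union[OF B0_sa cF FB])
  then show ?thesis by (subst eq)
qed

lemma B0_borel:
  assumes sep: "separable_metric (UNIV :: 'a::metric_space set)"
  shows "(B0_sets :: 'a set set) = sets borel"
proof
  show "(B0_sets :: 'a set set) \<subseteq> sets borel"
    unfolding B0_sets_def sets_borel by (rule sigma_sets_subseteq) auto
  obtain D :: "'a set" where D: "countable D" "UNIV \<subseteq> closure D"
    using sep unfolding separable_metric_def by blast
  have dense: "\<exists>a\<in>D. dist a z < e" if "0 < e" for z e
  proof -
    have "z \<in> closure D" using D(2) by blast
    then show ?thesis using that unfolding closure_approachable by blast
  qed
  show "sets borel \<subseteq> (B0_sets :: 'a set set)"
    unfolding sets_borel
    by (rule sigma_algebra.sigma_sets_subset[OF B0_sa]) (auto intro: open_B0[OF D(1) dense])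
qed


lemma rt_interior:
  fixes x y :: "'a::metric_space" and D :: "'a set"
  assumes R: "real_tree (UNIV :: 'a set)"
    and dense: "\<And>z e. 0 < e \<Longrightarrow> \<exists>a\<in>D. dist a z < e"
    and t: "0 < t" "t < dist x y"
  shows "\<exists>a\<in>D. \<exists>b\<in>D. seg_param x y t \<in> segment_rt a b"
proof -
  let ?z = "seg_param x y t" and ?d = "dist x y"
  define e where "e = min t (?d - t) / 2"
  have e: "0 < e" "e < t" "e < ?d - t" using t unfolding e_def by auto
  obtain a where a: "a \<in> D" "dist a x < e" using dense[OF e(1)] by blast
  obtain b where b: "b \<in> D" "dist b y < e" using dense[OF e(1)] by blast
  have tI: "t \<in> {0..?d}" using t by auto
  have zx: "dist x ?z = t" and zy: "dist ?z y = ?d - t" using rt_dists[OF R tI] by auto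
  have h1: "gromov_product ?z x y \<ge> min (gromov_product ?z x a) (gromov_product ?z y a)"
    by (rule rt_hyp[OF R])
  have p0: "gromov_product ?z x y = 0" unfolding gromov_product_def using zx zy
    by (simp add: dist_commute)
  have "dist x ?z \<le> dist x a + dist a ?z" by (rule dist_triangle)
  then have "gromov_product ?z x a > 0" unfolding gromov_product_def using zx a e
    by (simp add: dist_commute)
  then have "gromov_product ?z y a \<le> 0" using h1 p0 by linarith
  then have q1: "dist y ?z + dist ?z a = dist y a" by (rule gp_zero)
  have h2: "gromov_product ?z a y \<ge> min (gromov_product ?z a b) (gromov_product ?z y b)"
    by (rule rt_hyp[OF R])
  have p1: "gromov_product ?z a y = 0" unfolding gromov_product_def using q1
    by (simp add: dist_commute)
  have "dist y ?z \<le> dist y b + dist b ?z" by (rule dist_triangle)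
  then have "gromov_product ?z y b > 0" unfolding gromov_product_def using zy b e
    by (simp add: dist_commute)
  then have "gromov_product ?z a b \<le> 0" using h2 p1 by linarith
  then have "dist a ?z + dist ?z b = dist a b" by (rule gp_zero)
  then have "?z \<in> segment_rt a b" unfolding rt_seg_char[OF R] by (simp add: dist_commute)
  then show ?thesis using a b by blast
qed

lemma rt_inj:
  fixes a b :: "'a::metric_space"
  assumes R: "real_tree (UNIV :: 'a set)"
  shows "inj_on (seg_param a b) {0..dist a b}"
proof (rule inj_onI)
  fix s t assume "s \<in> {0..dist a b}" "t \<in> {0..dist a b}" "seg_param a b s = seg_param a b t"
  then show "s = t" using rt_iso[OF R, of s a b t] by simp
qed

lemma borel_gen: "sets (borel :: real measure) = sigma_sets UNIV (range (\<lambda>(a,b). {a..b::real}))"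
  by (subst borel_eq_atLeastAtMost) (simp add: sets_measure_of)

lemma img_S:
  fixes a b :: "'a::metric_space"
  assumes R: "real_tree (UNIV :: 'a set)" and B: "B \<in> sets borel"
  shows "seg_param a b ` (B \<inter> {0..dist a b}) \<in> S_sets"
proof -
  let ?g = "seg_param a b" and ?I = "{0..dist a b}"
  have "B \<in> sigma_sets UNIV (range (\<lambda>(a,b). {a..b::real}))" using B borel_gen by simp
  then show ?thesis
  proof (induction rule: sigma_sets.induct)
    case (Basic X)
    then obtain p q where X: "X = {p..q}" by auto
    show ?case
    proof (cases "max p 0 \<le> min q (dist a b)")
      case True
      have "X \<inter> ?I = {max p 0 .. min q (dist a b)}" unfolding X by auto
      then have "?g ` (X \<inter> ?I) = segment_rt (?g (max p 0)) (?g (min q (dist a b)))"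
        using rt_subseg[OF R, of "max p 0" "min q (dist a b)" a b] True by simp
      then show ?thesis unfolding S_sets_def by (metis (mono_tags, lifting) mem_Collect_eq sigma_sets.Basic)
    next
      case False
      then have "X \<inter> ?I = {}" unfolding X by auto
      then show ?thesis unfolding S_sets_def by (simp add: sigma_sets.Empty)
    qed
  next
    case Empty
    then show ?case unfolding S_sets_def by (simp add: sigma_sets.Empty)
  next
    case (Compl X)
    have "?g ` ((UNIV - X) \<inter> ?I) = ?g ` ?I - ?g ` (X \<inter> ?I)"
      using rt_inj[OF R, of a b] unfolding inj_on_def by blast
    moreover have "?g ` ?I \<in> S_sets" unfolding S_sets_def segment_rt_def[symmetric]
      by (rule sigma_sets.Basic) blast
    ultimately show ?case using Compl.IH S_Diff by metis
  next
    case (Union A)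
    have eq: "?g ` ((\<Union>i. A i) \<inter> ?I) = (\<Union>i. ?g ` (A i \<inter> ?I))" by blast
    have "range (\<lambda>i. ?g ` (A i \<inter> ?I)) \<subseteq> S_sets" using Union.IH by auto
    then have "(\<Union>i. ?g ` (A i \<inter> ?I)) \<in> S_sets" by (rule sigma_algebra.countable_nat_UN[OF S_sa])
    then show ?case using eq by simp
  qed
qed


lemma img_null:
  fixes a b x y :: "'a::metric_space"
  assumes R: "real_tree (UNIV :: 'a set)" and Z: "negligible Z"
  shows "negligible (seg_trace x y (seg_param a b ` (Z \<inter> {0..dist a b})))"
proof -
  let ?I = "{0..dist a b}"
  let ?g = "\<lambda>s. dist x (seg_param a b s)"
  have sub: "seg_trace x y (seg_param a b ` (Z \<inter> ?I)) \<subseteq> ?g ` (Z \<inter> ?I)"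
  proof
    fix t assume "t \<in> seg_trace x y (seg_param a b ` (Z \<inter> ?I))"
    then have t: "t \<in> {0..dist x y}" and "seg_param x y t \<in> seg_param a b ` (Z \<inter> ?I)"
      unfolding seg_trace_def by auto
    then obtain s where s: "s \<in> Z \<inter> ?I" "seg_param x y t = seg_param a b s" by auto
    have "?g s = t" using rt_dists(1)[OF R t] s(2) by simp
    then show "t \<in> ?g ` (Z \<inter> ?I)" using s(1) by force
  qed
  have "negligible (?g ` (Z \<inter> ?I))"
  proof (rule negligible_locally_Lipschitz_image)
    show "DIM(real) \<le> DIM(real)" by simp
    show "negligible (Z \<inter> ?I)" by (rule negligible_subset[OF Z]) auto
    fix u assume u: "u \<in> Z \<inter> ?I"
    show "\<exists>T B. open T \<and> u \<in> T \<and> (\<forall>v\<in>(Z \<inter> ?I) \<inter> T. norm (?g v - ?g u) \<le> B * norm (v - u))"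
    proof (intro exI[of _ UNIV] exI[of _ 1] conjI ballI)
      fix v assume v: "v \<in> (Z \<inter> ?I) \<inter> UNIV"
      have "dist x (seg_param a b v) \<le> dist x (seg_param a b u) + dist (seg_param a b u) (seg_param a b v)"
        by (rule dist_triangle)
      moreover have "dist x (seg_param a b u) \<le> dist x (seg_param a b v) + dist (seg_param a b v) (seg_param a b u)"
        by (rule dist_triangle)
      moreover have "dist (seg_param a b u) (seg_param a b v) = \<bar>u - v\<bar>" using rt_iso[OF R, of u a b v] u v by simp
      moreover have "dist (seg_param a b v) (seg_param a b u) = \<bar>v - u\<bar>" using rt_iso[OF R, of v a b u] u v by simp
      moreover have "\<bar>u - v\<bar> = \<bar>v - u\<bar>" by (rule abs_minus_commute)
      ultimately show "norm (?g v - ?g u) \<le> 1 * norm (v - u)"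
        unfolding real_norm_def mult_1 abs_le_iff by linarith
    qed auto
  qed
  then show ?thesis using sub negligible_subset by blast
qed

lemma length_zero:
  assumes h: "\<And>x y. negligible (seg_trace x y M)"
  shows "length_measure M = 0"
proof -
  have e: "emeasure lebesgue (seg_trace x y M) = 0" for x y
    using h[of x y] by (simp add: negligible_iff_null_sets null_setsD1)
  have "length_measure M \<le> 0" unfolding length_measure_def
    by (rule SUP_least) (simp add: e)
  then show ?thesis by simp
qed

lemma G_Sc:
  assumes R: "real_tree (UNIV :: 'a::metric_space set)"
    and sep: "separable_metric (UNIV :: 'a set)"
  shows "(G_sets :: 'a set set) \<subseteq> S_completion"
proof
  fix X :: "'a set" assume X: "X \<in> G_sets"
  obtain D :: "'a set" where D: "countable D" "UNIV \<subseteq> closure D"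
    using sep unfolding separable_metric_def by blast
  have dense: "\<exists>a\<in>D. dist a z < e" if "0 < e" for z e
  proof -
    have "z \<in> closure D" using D(2) by blast
    then show ?thesis using that unfolding closure_approachable by blast
  qed
  have ex: "\<forall>a b. \<exists>B N'. B \<in> sets borel \<and> N' \<in> sets borel \<and> negligible N' \<and>
      B \<subseteq> seg_trace a b X \<and> seg_trace a b X \<subseteq> B \<union> N'"
  proof (intro allI)
    fix a b :: 'a
    have "seg_trace a b X \<in> sets lebesgue" using X unfolding G_sets_def by auto
    then obtain S N N' where SN: "seg_trace a b X = S \<union> N" "N \<subseteq> N'" "N' \<in> null_sets lborel" "S \<in> sets lborel"
      by (rule sets_completionE)
    have "N' \<in> sets borel" using SN(3) null_setsD2 sets_lborel by metis
    moreover have "negligible N'" using SN(3) null_sets_completionI negligible_iff_null_sets by metis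
    moreover have "S \<in> sets borel" using SN(4) by simp
    ultimately show "\<exists>B N'. B \<in> sets borel \<and> N' \<in> sets borel \<and> negligible N' \<and>
      B \<subseteq> seg_trace a b X \<and> seg_trace a b X \<subseteq> B \<union> N'"
      using SN(1,2) by blast
  qed
  then obtain Bf Nf where BN: "\<And>a b. Bf a b \<in> sets borel" "\<And>a b. Nf a b \<in> sets borel"
    "\<And>a b. negligible (Nf a b)" "\<And>a b. Bf a b \<subseteq> seg_trace a b X"
    "\<And>a b. seg_trace a b X \<subseteq> Bf a b \<union> Nf a b"
    by metis
  define Sk where "Sk = (\<Union>p\<in>D\<times>D. segment_rt (fst p) (snd p))"
  define A where "A = (\<Union>p\<in>D\<times>D. seg_param (fst p) (snd p) ` (Bf (fst p) (snd p) \<inter> {0..dist (fst p) (snd p)}))"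
  define NN where "NN = (\<Union>p\<in>D\<times>D. seg_param (fst p) (snd p) ` (Nf (fst p) (snd p) \<inter> {0..dist (fst p) (snd p)}))"
  define M where "M = (UNIV - Sk) \<union> NN"
  have cDD: "countable (D \<times> D)" using D(1) D(1) by (rule countable_SIGMA)
  have SkS: "Sk \<in> S_sets" unfolding Sk_def
  proof (rule sigma_algebra.countable_UN''[OF S_sa cDD])
    fix p :: "'a \<times> 'a"
    show "segment_rt (fst p) (snd p) \<in> S_sets" unfolding S_sets_def by (rule sigma_sets.Basic) blast
  qed
  have AS: "A \<in> S_sets" unfolding A_def
    by (rule sigma_algebra.countable_UN''[OF S_sa cDD]) (rule img_S[OF R BN(1)])
  have NNS: "NN \<in> S_sets" unfolding NN_def
    by (rule sigma_algebra.countable_UN''[OF S_sa cDD]) (rule img_S[OF R BN(2)])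
  have MS: "M \<in> S_sets" unfolding M_def by (intro S_Un S_Diff S_UNIV SkS NNS)
  have AX: "A \<subseteq> X"
  proof
    fix z assume "z \<in> A"
    then obtain p t where "t \<in> Bf (fst p) (snd p)" "z = seg_param (fst p) (snd p) t"
      unfolding A_def by blast
    then show "z \<in> X" using BN(4)[of "fst p" "snd p"] unfolding seg_trace_def by blast
  qed
  have NM: "X - A \<subseteq> M"
  proof
    fix z assume z: "z \<in> X - A"
    show "z \<in> M"
    proof (cases "z \<in> Sk")
      case False
      then show ?thesis unfolding M_def by blast
    next
      case True
      then obtain p where p: "p \<in> D \<times> D" "z \<in> segment_rt (fst p) (snd p)" unfolding Sk_def by blast
      then obtain t where t: "t \<in> {0..dist (fst p) (snd p)}" "z = seg_param (fst p) (snd p) t"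
        unfolding segment_rt_def by blast
      then have "t \<in> seg_trace (fst p) (snd p) X" using z unfolding seg_trace_def by blast
      then have "t \<in> Bf (fst p) (snd p) \<union> Nf (fst p) (snd p)" using BN(5) by blast
      moreover have "t \<notin> Bf (fst p) (snd p)"
      proof
        assume "t \<in> Bf (fst p) (snd p)"
        then have "z \<in> A" unfolding A_def using p(1) t by blast
        then show False using z by blast
      qed
      ultimately have "t \<in> Nf (fst p) (snd p)" by blast
      then have "z \<in> NN" unfolding NN_def using p(1) t by blast
      then show ?thesis unfolding M_def by blast
    qed
  qed
  have Mnull: "length_measure M = 0"
  proof (rule length_zero)
    fix x y :: 'a
    let ?F = "(\<lambda>p. seg_trace x y (seg_param (fst p) (snd p) ` (Nf (fst p) (snd p) \<inter> {0..dist (fst p) (snd p)}))) ` (D \<times> D)"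
    have sub: "seg_trace x y M \<subseteq> {0, dist x y} \<union> \<Union>?F"
    proof
      fix t assume tM: "t \<in> seg_trace x y M"
      then have t: "t \<in> {0..dist x y}" and zM: "seg_param x y t \<in> M" unfolding seg_trace_def by auto
      show "t \<in> {0, dist x y} \<union> \<Union>?F"
      proof (cases "t = 0 \<or> t = dist x y")
        case True
        then show ?thesis by blast
      next
        case False
        then have "0 < t" "t < dist x y" using t by auto
        then obtain a b where "a \<in> D" "b \<in> D" "seg_param x y t \<in> segment_rt a b"
          using rt_interior[OF R dense] by blast
        then have "seg_param x y t \<in> Sk" unfolding Sk_def by force
        then have "seg_param x y t \<in> NN" using zM unfolding M_def by blast
        then obtain p where p: "p \<in> D \<times> D"
          "seg_param x y t \<in> seg_param (fst p) (snd p) ` (Nf (fst p) (snd p) \<inter> {0..dist (fst p) (snd p)})"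
          unfolding NN_def by blast
        then have "t \<in> seg_trace x y (seg_param (fst p) (snd p) ` (Nf (fst p) (snd p) \<inter> {0..dist (fst p) (snd p)}))"
          using t unfolding seg_trace_def by blast
        then show ?thesis using p(1) by blast
      qed
    qed
    have "negligible (\<Union>?F)"
    proof (rule negligible_countable_Union)
      show "countable ?F" using cDD by (rule countable_image)
      fix S assume "S \<in> ?F"
      then obtain p where "S = seg_trace x y (seg_param (fst p) (snd p) ` (Nf (fst p) (snd p) \<inter> {0..dist (fst p) (snd p)}))"
        by blast
      then show "negligible S" using img_null[OF R BN(3)] by simp
    qed
    then have "negligible ({0, dist x y} \<union> \<Union>?F)" by (intro negligible_Un) auto
    then show "negligible (seg_trace x y M)" using sub negligible_subset by blast
  qed
  have "X = A \<union> (X - A)" using AX by blast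
  then show "X \<in> S_completion" unfolding S_completion_def using AS MS NM Mnull by blast
qed

theorem proposition4:
  assumes "real_tree (UNIV :: 'a::metric_space set)"
  shows "((S_sets :: 'a set set) \<subseteq> B0_sets \<and> (B0_sets :: 'a set set) \<subseteq> G_sets
           \<and> (S_completion :: 'a set set) \<subseteq> G_sets)
         \<and> (separable_metric (UNIV :: 'a set) \<longrightarrow>
           (B0_sets :: 'a set set) = sets borel \<and> (S_completion :: 'a set set) = G_sets)"
  using S_B0[OF assms] B0_G[OF assms] Sc_G[OF assms] B0_borel G_Sc[OF assms] by blast

end
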